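(* The system below has an equilibrium of the form $G_3=(S^*,I_1^*,0,0,R^* )$ with $S^*,I_1^*,R^*>0$ if and only if $S^{**}>\sigma_1$ (equivalently $K>K^*:=\frac{b\sigma_1}{b-\mu_0}$), and in that case it is unique. Moreover, writing $\hat S_1=S^{**}-\sigma_1$, its components satisfy $$S^*+I_1^*=\sigma_1,\qquad I_1^*=\frac{b}{K\alpha_1}(\hat S_1-R^* )=\frac{(\mu_4'-\mu_0)R^*}{\alpha_1R^*+\rho_1},$$ and $R^*$ is the unique root in $(0,\hat S_1)$ of $$f(R,K)=\Big(\hat S_1-R+\tfrac{K}{b}(\mu_0-\mu_4')\Big)R+\frac{\rho_1}{\alpha_1}(\hat S_1-R)=0.$$
   Context: Consider, for $t\ge0$, the system $S'=\big(b(1-\tfrac{N}{K})-\alpha_1I_1-\alpha_2I_2-(\beta_1+\beta_2+\alpha_3)I_{12}-\mu_0\big)S$, $I_1'=\big(b(1-\tfrac{N}{K})+\alpha_1S-\eta_1I_{12}-\gamma_1I_2-\mu_1\big)I_1+\beta_1SI_{12}$, $I_2'=\big(b(1-\tfrac{N}{K})+\alpha_2S-\eta_2I_{12}-\gamma_2I_1-\mu_2\big)I_2+\beta_2SI_{12}$, $I_{12}'=\big(b(1-\tfrac{N}{K})+\alpha_3S+\eta_1I_1+\eta_2I_2-\mu_3\big)I_{12}+(\gamma_1+\gamma_2)I_1I_2$, $R'=\big(b(1-\tfrac{N}{K})-\mu_4'\big)R+\rho_1I_1+\rho_2I_2+\rho_3I_{12}$, where $N=S+I_1+I_2+I_{12}+R$.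 All parameters $b,K,\alpha_i,\beta_i,\gamma_i,\eta_i,\rho_i,\mu_0,\mu_i'$ are positive and $\mu_i=\rho_i+\mu_i'$ for $i=1,2,3$. Standing assumptions: $b>\mu_0$, $b>\mu_i$ ($i=1,2,3$), $b>\mu_4'$, and $\mu_0<\mu_4'<\mu_j'$ for $j=1,2,3$. Set $\sigma_k=(\mu_k-\mu_0)/\alpha_k$ ($k=1,2,3$), assumed to satisfy $\sigma_1<\sigma_2<\sigma_3$, and $S^{**}=\frac{K}{b}(b-\mu_0)$. *)

theory Defs
  imports Complex_Main
begin

text \<open>Parameters of the co-infection model. The death rates mu_i (i=1,2,3) of the
infected classes are given by mu_i = rho_i + mu_i' (mu_i' = natural/disease death rate).\<close>

record params =
  b :: real  K :: real
  \<alpha>1 :: real  \<alpha>2 :: real  \<alpha>3 :: real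
  \<beta>1 :: real  \<beta>2 :: real
  \<gamma>1 :: real  \<gamma>2 :: real
  \<eta>1 :: real  \<eta>2 :: real
  \<rho>1 :: real  \<rho>2 :: real  \<rho>3 :: real
  \<mu>0 :: real  \<mu>1' :: real  \<mu>2' :: real  \<mu>3' :: real  \<mu>4' :: real

definition \<mu>1 :: "params \<Rightarrow> real" where "\<mu>1 p = \<rho>1 p + \<mu>1' p"
definition \<mu>2 :: "params \<Rightarrow> real" where "\<mu>2 p = \<rho>2 p + \<mu>2' p"
definition \<mu>3 :: "params \<Rightarrow> real" where "\<mu>3 p = \<rho>3 p + \<mu>3' p"

definition \<sigma>1 :: "params \<Rightarrow> real" where "\<sigma>1 p = (\<mu>1 p - \<mu>0 p) / \<alpha>1 p"
definition \<sigma>2 :: "params \<Rightarrow> real" where "\<sigma>2 p = (\<mu>2 p - \<mu>0 p) / \<alpha>2 p"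
definition \<sigma>3 :: "params \<Rightarrow> real" where "\<sigma>3 p = (\<mu>3 p - \<mu>0 p) / \<alpha>3 p"

definition Sss :: "params \<Rightarrow> real" where "Sss p = K p / b p * (b p - \<mu>0 p)"

definition field :: "params \<Rightarrow> real \<times> real \<times> real \<times> real \<times> real \<Rightarrow> real \<times> real \<times> real \<times> real \<times> real" where
  "field p x = (case x of (S, I\<^sub>1, I\<^sub>2, I\<^sub>1\<^sub>2, R) \<Rightarrow>
     (let N = S + I\<^sub>1 + I\<^sub>2 + I\<^sub>1\<^sub>2 + R; g = b p * (1 - N / K p) in
      ((g - \<alpha>1 p * I\<^sub>1 - \<alpha>2 p * I\<^sub>2 - (\<beta>1 p + \<beta>2 p + \<alpha>3 p) * I\<^sub>1\<^sub>2 - \<mu>0 p) * S,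
       (g + \<alpha>1 p * S - \<eta>1 p * I\<^sub>1\<^sub>2 - \<gamma>1 p * I\<^sub>2 - \<mu>1 p) * I\<^sub>1 + \<beta>1 p * S * I\<^sub>1\<^sub>2,
       (g + \<alpha>2 p * S - \<eta>2 p * I\<^sub>1\<^sub>2 - \<gamma>2 p * I\<^sub>1 - \<mu>2 p) * I\<^sub>2 + \<beta>2 p * S * I\<^sub>1\<^sub>2,
       (g + \<alpha>3 p * S + \<eta>1 p * I\<^sub>1 + \<eta>2 p * I\<^sub>2 - \<mu>3 p) * I\<^sub>1\<^sub>2 + (\<gamma>1 p + \<gamma>2 p) * I\<^sub>1 * I\<^sub>2,
       (g - \<mu>4' p) * R + \<rho>1 p * I\<^sub>1 + \<rho>2 p * I\<^sub>2 + \<rho>3 p * I\<^sub>1\<^sub>2)))"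

definition equilibrium :: "params \<Rightarrow> real \<times> real \<times> real \<times> real \<times> real \<Rightarrow> bool" where
  "equilibrium p x \<longleftrightarrow> field p x = (0, 0, 0, 0, 0)"

definition G3_eq :: "params \<Rightarrow> real \<Rightarrow> real \<Rightarrow> real \<Rightarrow> bool" where
  "G3_eq p S I R \<longleftrightarrow> S > 0 \<and> I > 0 \<and> R > 0 \<and> equilibrium p (S, I, 0, 0, R)"

definition S1hat :: "params \<Rightarrow> real" where "S1hat p = Sss p - \<sigma>1 p"

definition fR :: "params \<Rightarrow> real \<Rightarrow> real" where
  "fR p R = (S1hat p - R + K p / b p * (\<mu>0 p - \<mu>4' p)) * R + \<rho>1 p / \<alpha>1 p * (S1hat p - R)"

definition standing :: "params \<Rightarrow> bool" where
  "standing p \<longleftrightarrow>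
     b p > 0 \<and> K p > 0 \<and> \<alpha>1 p > 0 \<and> \<alpha>2 p > 0 \<and> \<alpha>3 p > 0 \<and> \<beta>1 p > 0 \<and> \<beta>2 p > 0 \<and>
     \<gamma>1 p > 0 \<and> \<gamma>2 p > 0 \<and> \<eta>1 p > 0 \<and> \<eta>2 p > 0 \<and> \<rho>1 p > 0 \<and> \<rho>2 p > 0 \<and> \<rho>3 p > 0 \<and>
     \<mu>0 p > 0 \<and> \<mu>1' p > 0 \<and> \<mu>2' p > 0 \<and> \<mu>3' p > 0 \<and> \<mu>4' p > 0 \<and>
     b p > \<mu>0 p \<and> b p > \<mu>1 p \<and> b p > \<mu>2 p \<and> b p > \<mu>3 p \<and> b p > \<mu>4' p \<and>
     \<mu>0 p < \<mu>4' p \<and> \<mu>4' p < \<mu>1' p \<and> \<mu>4' p < \<mu>2' p \<and> \<mu>4' p < \<mu>3' p \<and>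
     \<sigma>1 p < \<sigma>2 p \<and> \<sigma>2 p < \<sigma>3 p"

end

theory Submission
  imports Defs
begin

lemma root_unique:
  fixes B a Sh r R :: real
  assumes "a > 0" "Sh > 0" "r > 0" "R > 0"
    and "-(r*r) + B*r + a*Sh = 0" "-(R*R) + B*R + a*Sh = 0"
  shows "r = R"
proof (rule ccontr)
  assume ne: "r \<noteq> R"
  have "(r - R) * (B - r - R) = 0" using assms(5,6) by (simp add: algebra_simps)
  hence "B = r + R" using ne by simp
  hence "-(R*R) + B*R + a*Sh = r*R + a*Sh" by (simp add: algebra_simps)
  moreover have "r*R + a*Sh > 0" using assms(1-4) by (meson add_pos_pos mult_pos_pos)
  ultimately show False using assms(6) by simp
qed

lemma fR_alt: "fR p R = -(R*R) + (S1hat p + K p / b p * (\<mu>0 p - \<mu>4' p) - \<rho>1 p / \<alpha>1 p) * R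
   + \<rho>1 p / \<alpha>1 p * S1hat p"
  by (simp add: fR_def algebra_simps diff_divide_distrib add_divide_distrib)

lemma fwd:
  assumes st: "standing p" and G: "G3_eq p S I R"
  shows "S + I = \<sigma>1 p
        \<and> I = b p / (K p * \<alpha>1 p) * (S1hat p - R)
        \<and> I = (\<mu>4' p - \<mu>0 p) * R / (\<alpha>1 p * R + \<rho>1 p)
        \<and> 0 < R \<and> R < S1hat p \<and> fR p R = 0"
proof -
  from st have pos: "b p > 0" "K p > 0" "\<alpha>1 p > 0" "\<rho>1 p > 0" "\<mu>0 p < \<mu>4' p"
    by (simp_all add: standing_def)
  from G have S0: "S>0" and I0: "I>0" and R0: "R>0" and eq: "field p (S,I,0,0,R) = (0,0,0,0,0)"
    by (simp_all add: G3_eq_def equilibrium_def)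
  define g where "g = b p * (1 - (S+I+R)/K p)"
  from eq have e1: "(g - \<alpha>1 p * I - \<mu>0 p) * S = 0" and e2: "(g + \<alpha>1 p*S - \<mu>1 p)*I = 0"
    and e3: "(g - \<mu>4' p)*R + \<rho>1 p * I = 0"
    by (simp_all add: field_def g_def Let_def)
  from e1 S0 have f1: "g - \<alpha>1 p * I - \<mu>0 p = 0" by simp
  from e2 I0 have f2: "g + \<alpha>1 p * S - \<mu>1 p = 0" by simp
  have "\<alpha>1 p * (S + I) = \<mu>1 p - \<mu>0 p" using f1 f2 by (simp add: algebra_simps)
  hence sum: "S + I = \<sigma>1 p" using pos by (simp add: \<sigma>1_def field_simps)
  have "\<alpha>1 p * I = g - \<mu>0 p" using f1 by simp
  also have "\<dots> = b p / K p * (S1hat p - R)"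
    using pos sum by (simp add: g_def S1hat_def Sss_def field_simps)
  finally have aI: "\<alpha>1 p * I = b p / K p * (S1hat p - R)" .
  hence i1: "I = b p / (K p * \<alpha>1 p) * (S1hat p - R)" using pos by (simp add: field_simps)
  have "I * (\<alpha>1 p * R + \<rho>1 p) = (\<mu>4' p - \<mu>0 p) * R"
    using e3 f1 by (simp add: algebra_simps)
  moreover have den: "\<alpha>1 p * R + \<rho>1 p > 0" using pos R0 by (simp add: add_pos_pos)
  ultimately have i2: "I = (\<mu>4' p - \<mu>0 p) * R / (\<alpha>1 p * R + \<rho>1 p)"
    by (simp add: field_simps)
  have "b p / K p * (S1hat p - R) > 0" using aI pos I0 by (metis mult_pos_pos)
  hence "S1hat p - R > 0" using pos by (simp add: zero_less_mult_iff zero_less_divide_iff)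
  hence lt: "R < S1hat p" by simp
  have sh: "S1hat p - R = K p * \<alpha>1 p * I / b p" using aI pos by (simp add: field_simps)
  have "fR p R = (S1hat p - R) * (R + \<rho>1 p / \<alpha>1 p) + K p / b p * (\<mu>0 p - \<mu>4' p) * R"
    by (simp add: fR_def algebra_simps)
  also have "\<dots> = K p / b p * (I * (\<alpha>1 p * R + \<rho>1 p) - (\<mu>4' p - \<mu>0 p) * R)"
    unfolding sh using pos by (simp add: field_simps)
  also have "\<dots> = 0" using \<open>I * (\<alpha>1 p * R + \<rho>1 p) = (\<mu>4' p - \<mu>0 p) * R\<close> by simp
  finally show ?thesis using sum i1 i2 R0 lt by simp
qed


lemma exist:
  assumes st: "standing p" and hyp: "Sss p > \<sigma>1 p"
  shows "\<exists>S I R. G3_eq p S I R"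
proof -
  from st have pos: "b p > 0" "K p > 0" "\<alpha>1 p > 0" "\<rho>1 p > 0" "\<mu>0 p < \<mu>4' p"
     "\<mu>4' p < \<mu>1' p"
    by (simp_all add: standing_def)
  define Sh where "Sh = S1hat p"
  have Sh0: "Sh > 0" using hyp by (simp add: Sh_def S1hat_def)
  define a where "a = \<rho>1 p / \<alpha>1 p"
  have a0: "a > 0" using pos by (simp add: a_def)
  define c where "c = K p / b p * (\<mu>0 p - \<mu>4' p)"
  have c0: "c < 0" using pos by (simp add: c_def divide_neg_pos mult_pos_neg)
  define B where "B = Sh + c - a"
  define D where "D = B*B + 4*a*Sh"
  have aSh: "a * Sh > 0" using a0 Sh0 by simp
  have D0: "D > B*B" using aSh by (simp add: D_def mult.commute)
  have "sqrt (B*B) < sqrt D" using D0 by (rule real_sqrt_less_mono)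
  moreover have "sqrt (B*B) = \<bar>B\<bar>" by (simp add: real_sqrt_mult_self)
  ultimately have sqD: "sqrt D > \<bar>B\<bar>" by simp
  have sq2: "sqrt D * sqrt D = D" using D0
  proof -
    have "D \<ge> 0" using D0 by (smt (verit) zero_le_square)
    thus ?thesis by simp
  qed
  define R where "R = (B + sqrt D) / 2"
  have R0: "R > 0" using sqD by (simp add: R_def)
  have "fR p R = -(R*R) + B*R + a*Sh"
    by (simp add: fR_alt B_def c_def a_def Sh_def)
  also have "\<dots> = (B*B - sqrt D * sqrt D)/4 + a*Sh"
    by (simp add: R_def field_simps)
  also have "\<dots> = 0" unfolding sq2 by (simp add: D_def)
  finally have fz: "fR p R = 0" .
  have "(Sh - R) * (R + a) = - c * R"
    using fz by (simp add: fR_def Sh_def a_def c_def algebra_simps)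
  moreover have "- c * R > 0" using c0 R0 by (simp add: mult_neg_pos)
  ultimately have "(Sh - R) * (R + a) > 0" by simp
  moreover have "R + a > 0" using R0 a0 by simp
  ultimately have ShR: "Sh - R > 0" by (simp add: zero_less_mult_iff)
  define I where "I = b p / (K p * \<alpha>1 p) * (Sh - R)"
  have I0: "I > 0" using pos ShR by (simp add: I_def)
  have aI: "\<alpha>1 p * I = b p / K p * (Sh - R)" using pos by (simp add: I_def field_simps)
  have "I * (\<alpha>1 p * R + \<rho>1 p) = b p / K p * ((Sh - R) * (R + a))"
    using pos by (simp add: I_def a_def field_simps)
  also have "\<dots> = b p / K p * (- c * R)"
    using \<open>(Sh - R) * (R + a) = - c * R\<close> by simp
  also have "\<dots> = (\<mu>4' p - \<mu>0 p) * R" using pos by (simp add: c_def field_simps)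
  finally have keyI: "I * (\<alpha>1 p * R + \<rho>1 p) = (\<mu>4' p - \<mu>0 p) * R" .
  have m1: "\<mu>4' p - \<mu>0 p < \<mu>1 p - \<mu>0 p" using pos by (simp add: \<mu>1_def)
  have "\<alpha>1 p * I * (\<alpha>1 p * R + \<rho>1 p) = \<alpha>1 p * ((\<mu>4' p - \<mu>0 p) * R)"
    using keyI by (metis mult.assoc)
  also have "\<dots> < \<alpha>1 p * ((\<mu>1 p - \<mu>0 p) * R)"
    using m1 pos R0 by simp
  also have "\<dots> \<le> (\<mu>1 p - \<mu>0 p) * (\<alpha>1 p * R + \<rho>1 p)"
    using m1 pos by (simp add: algebra_simps)
  finally have "\<alpha>1 p * I * (\<alpha>1 p * R + \<rho>1 p) < (\<mu>1 p - \<mu>0 p) * (\<alpha>1 p * R + \<rho>1 p)" .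
  moreover have "\<alpha>1 p * R + \<rho>1 p > 0" using pos R0 by (simp add: add_pos_pos)
  ultimately have "\<alpha>1 p * I < \<mu>1 p - \<mu>0 p" by simp
  hence Ilt: "I < \<sigma>1 p" using pos by (simp add: \<sigma>1_def field_simps)
  define S where "S = \<sigma>1 p - I"
  have S0: "S > 0" using Ilt by (simp add: S_def)
  define g where "g = b p * (1 - (S+I+R)/K p)"
  have f1: "g - \<alpha>1 p * I - \<mu>0 p = 0"
    unfolding aI using pos
    by (simp add: g_def S_def Sh_def S1hat_def Sss_def field_simps)
  have f2: "g + \<alpha>1 p * S - \<mu>1 p = 0"
    using f1 pos by (simp add: S_def \<sigma>1_def field_simps)
  have f3: "(g - \<mu>4' p)*R + \<rho>1 p * I = 0"
    using f1 keyI by (simp add: algebra_simps)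
  have "equilibrium p (S, I, 0, 0, R)"
    using f1 f2 f3 unfolding equilibrium_def field_def Let_def g_def by simp
  hence "G3_eq p S I R" using S0 I0 R0 by (simp add: G3_eq_def)
  thus ?thesis by blast
qed

theorem mainTheorem7:
  assumes "standing p"
  shows "((\<exists>S I R. G3_eq p S I R) \<longleftrightarrow> Sss p > \<sigma>1 p)
    \<and> (Sss p > \<sigma>1 p \<longleftrightarrow> K p > b p * \<sigma>1 p / (b p - \<mu>0 p))
    \<and> (Sss p > \<sigma>1 p \<longrightarrow> (\<exists>!x. case x of (S, I, R) \<Rightarrow> G3_eq p S I R))
    \<and> (\<forall>S I R. G3_eq p S I R \<longrightarrow>
          S + I = \<sigma>1 p
        \<and> I = b p / (K p * \<alpha>1 p) * (S1hat p - R)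
        \<and> I = (\<mu>4' p - \<mu>0 p) * R / (\<alpha>1 p * R + \<rho>1 p)
        \<and> 0 < R \<and> R < S1hat p \<and> fR p R = 0
        \<and> (\<forall>r. 0 < r \<and> r < S1hat p \<and> fR p r = 0 \<longrightarrow> r = R))"
proof -
  note st = assms
  from st have pos: "b p > 0" "K p > 0" "\<alpha>1 p > 0" "\<rho>1 p > 0" "b p > \<mu>0 p"
    by (simp_all add: standing_def)
  have uniqR: "r = R" if "0 < r" "r < S1hat p" "fR p r = 0" "0 < R" "R < S1hat p" "fR p R = 0" for r R
  proof -
    have "\<rho>1 p / \<alpha>1 p > 0" using pos by simp
    moreover have "S1hat p > 0" using that by simp
    ultimately show ?thesis
      using root_unique[of "\<rho>1 p / \<alpha>1 p" "S1hat p" r R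
          "S1hat p + K p / b p * (\<mu>0 p - \<mu>4' p) - \<rho>1 p / \<alpha>1 p"] that
      by (simp add: fR_alt)
  qed
  have A: "(\<exists>S I R. G3_eq p S I R) \<longleftrightarrow> Sss p > \<sigma>1 p"
  proof
    assume "\<exists>S I R. G3_eq p S I R"
    then obtain S I R where "G3_eq p S I R" by blast
    from fwd[OF st this] have "0 < R" "R < S1hat p" by auto
    thus "Sss p > \<sigma>1 p" by (simp add: S1hat_def)
  next
    assume "Sss p > \<sigma>1 p" thus "\<exists>S I R. G3_eq p S I R" using exist[OF st] by blast
  qed
  have Bq: "Sss p > \<sigma>1 p \<longleftrightarrow> K p > b p * \<sigma>1 p / (b p - \<mu>0 p)"
    using pos by (simp add: Sss_def field_simps)
  have C: "Sss p > \<sigma>1 p \<longrightarrow> (\<exists>!x. case x of (S, I, R) \<Rightarrow> G3_eq p S I R)"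
  proof
    assume "Sss p > \<sigma>1 p"
    then obtain S I R where G: "G3_eq p S I R" using exist[OF st] by blast
    show "\<exists>!x. case x of (S, I, R) \<Rightarrow> G3_eq p S I R"
    proof (rule ex1I[of _ "(S, I, R)"])
      show "case (S, I, R) of (S, I, R) \<Rightarrow> G3_eq p S I R" using G by simp
    next
      fix x assume "case x of (S, I, R) \<Rightarrow> G3_eq p S I R"
      then obtain S' I' R' where x: "x = (S', I', R')" and G': "G3_eq p S' I' R'"
        by (cases x) auto
      note h = fwd[OF st G] and h' = fwd[OF st G']
      have "R' = R" using uniqR[of R' R] h h' by blast
      moreover have "I' = I" using h h' calculation by simp
      moreover have "S' = S" using h h' calculation by simp
      ultimately show "x = (S, I, R)" using x by simp
    qed
  qed
  have D: "\<forall>S I R. G3_eq p S I R \<longrightarrow>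
          S + I = \<sigma>1 p
        \<and> I = b p / (K p * \<alpha>1 p) * (S1hat p - R)
        \<and> I = (\<mu>4' p - \<mu>0 p) * R / (\<alpha>1 p * R + \<rho>1 p)
        \<and> 0 < R \<and> R < S1hat p \<and> fR p R = 0
        \<and> (\<forall>r. 0 < r \<and> r < S1hat p \<and> fR p r = 0 \<longrightarrow> r = R)"
  proof (intro allI impI)
    fix S I R assume G: "G3_eq p S I R"
    note h = fwd[OF st G]
    show "S + I = \<sigma>1 p
        \<and> I = b p / (K p * \<alpha>1 p) * (S1hat p - R)
        \<and> I = (\<mu>4' p - \<mu>0 p) * R / (\<alpha>1 p * R + \<rho>1 p)
        \<and> 0 < R \<and> R < S1hat p \<and> fR p R = 0
        \<and> (\<forall>r. 0 < r \<and> r < S1hat p \<and> fR p r = 0 \<longrightarrow> r = R)"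
      using h uniqR[of _ R] by blast
  qed
  show ?thesis using A Bq C D by blast
qed

end
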